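(* For every input $\sigma$ of List Update with Delays and every time $t$, the total cost (access cost plus swaps plus delay cost) incurred by ALG up to time $t$ is at most $6\sum_{k=1}^m d_k(t)$.
   Context: List Update with Delays. A set $\mathbb{E}$ of $n$ elements is kept in an ordered list (position $1$ is the head). An input $\sigma$ is a sequence of requests $r_1,\dots,r_m$; request $r_k$ specifies an element $e_k\in\mathbb{E}$, an arrival time $a_k$ and a delay function $D_k$ which is non-negative, non-decreasing, and $0$ up to time $a_k$. An algorithm may perform an access up to position $i$ at cost $i$, serving every pending request whose element currently lies in positions $1,\dots,i$, and may swap adjacent elements at cost $1$; actions are instantaneous. A request served at time $s$ incurs delay cost $D_k(s)$. Cost = access + swaps + delay. Algorithm ALG maintains a request counter $RC_k$ for each request and an element counter $EC_e$ for each element, with $EC_e=0$ initially. When $r_k$ arrives, $RC_k$ is created with value $0$. While $r_k$ is pending in ALG, $RC_k$ and $EC_{e_k}$ each increase by exactly the delay $r_k$ incurs; after $r_k$ is served, $RC_k$ stops increasing until it is deleted. Events: (i) prefix-request-counters event on $\ell\in[n]$, occurring when the sum of the non-deleted request counters of requests whose elements are currently in positions $1,\dots,\ell$ reaches $\ell$: ALG accesses the first $\min(2\ell,n)$ positions and deletes the request counters of requests for the elements in the first $\ell$ positions; (ii) element-counter event on $e$, occurring when $EC_e$ reaches the current position $\ell$ of $e$: ALG accesses the first $\min(2\ell,n)$ positions, deletes all request counters of requests for $e$, sets $EC_e\leftarrow 0$, and moves $e$ to the front by $\ell-1$ adjacent swaps. For a request $r_k$ let $s_k$ be the time ALG serves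 it ($s_k=\infty$ if never). Define $d_k(t)=D_k(\min(t,s_k))$ (for $s_k=\infty$, $d_k(t)=D_k(t)$), the delay ALG has incurred on $r_k$ up to time $t$. *)

theory Defs
  imports Main "HOL-Library.Multiset" Complex_Main
begin

text \<open>Input: initial list L0 (distinct, length n), m requests indexed 0..<m with
  element el k, arrival time a k and delay function D k.
  A run of ALG up to horizon T is a finite list of events (time, event),
  sorted by time; the event list is processed in order (simultaneous events
  in list order).\<close>

datatype 'e lu_event = PrefixEv nat | ElemEv 'e

text \<open>1-indexed position of an element in a list.\<close>
fun pos :: "'e list \<Rightarrow> 'e \<Rightarrow> nat" where
  "pos [] x = 0"
| "pos (y # ys) x = (if x = y then 1 else Suc (pos ys x))"

fun acc_len :: "'e list \<Rightarrow> 'e lu_event \<Rightarrow> nat" where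
  "acc_len L (PrefixEv l) = min (2 * l) (length L)"
| "acc_len L (ElemEv e) = min (2 * pos L e) (length L)"

fun swaps :: "'e list \<Rightarrow> 'e lu_event \<Rightarrow> nat" where
  "swaps L (PrefixEv l) = 0"
| "swaps L (ElemEv e) = pos L e - 1"

fun step_list :: "'e list \<Rightarrow> 'e lu_event \<Rightarrow> 'e list" where
  "step_list L (PrefixEv l) = L"
| "step_list L (ElemEv e) = e # remove1 e L"

definition list_before :: "'e list \<Rightarrow> (real \<times> 'e lu_event) list \<Rightarrow> nat \<Rightarrow> 'e list" where
  "list_before L0 evs i = foldl (\<lambda>L p. step_list L (snd p)) L0 (take i evs)"

definition serves :: "'e list \<Rightarrow> (nat \<Rightarrow> 'e) \<Rightarrow> (nat \<Rightarrow> real) \<Rightarrow>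
    (real \<times> 'e lu_event) list \<Rightarrow> nat \<Rightarrow> nat \<Rightarrow> bool" where
  "serves L0 el a evs j k \<longleftrightarrow> j < length evs \<and> a k \<le> fst (evs ! j) \<and>
     pos (list_before L0 evs j) (el k) \<le> acc_len (list_before L0 evs j) (snd (evs ! j))"

definition served_time :: "'e list \<Rightarrow> (nat \<Rightarrow> 'e) \<Rightarrow> (nat \<Rightarrow> real) \<Rightarrow>
    (real \<times> 'e lu_event) list \<Rightarrow> nat \<Rightarrow> real option" where
  "served_time L0 el a evs k =
     (if \<exists>j. serves L0 el a evs j k
      then Some (fst (evs ! (LEAST j. serves L0 el a evs j k))) else None)"

text \<open>d_k(t) = D_k(min(t, s_k)), the delay ALG has incurred on request k up to t.\<close>
definition dly :: "'e list \<Rightarrow> (nat \<Rightarrow> 'e) \<Rightarrow> (nat \<Rightarrow> real) \<Rightarrow> (nat \<Rightarrow> real \<Rightarrow> real) \<Rightarrow>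
    (real \<times> 'e lu_event) list \<Rightarrow> nat \<Rightarrow> real \<Rightarrow> real" where
  "dly L0 el a D evs k t =
     (case served_time L0 el a evs k of None \<Rightarrow> D k t | Some s \<Rightarrow> D k (min t s))"

definition deleted :: "'e list \<Rightarrow> (nat \<Rightarrow> 'e) \<Rightarrow> (nat \<Rightarrow> real) \<Rightarrow>
    (real \<times> 'e lu_event) list \<Rightarrow> nat \<Rightarrow> nat \<Rightarrow> bool" where
  "deleted L0 el a evs i k \<longleftrightarrow> (\<exists>j<i. j < length evs \<and> a k \<le> fst (evs ! j) \<and>
     (case snd (evs ! j) of
        PrefixEv l \<Rightarrow> pos (list_before L0 evs j) (el k) \<le> l
      | ElemEv e \<Rightarrow> el k = e))"

definition prefix_sum :: "'e list \<Rightarrow> nat \<Rightarrow> (nat \<Rightarrow> 'e) \<Rightarrow> (nat \<Rightarrow> real) \<Rightarrow>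
    (nat \<Rightarrow> real \<Rightarrow> real) \<Rightarrow> (real \<times> 'e lu_event) list \<Rightarrow> nat \<Rightarrow> real \<Rightarrow> nat \<Rightarrow> real" where
  "prefix_sum L0 m el a D evs i t l =
     (\<Sum>k\<in>{k. k < m \<and> \<not> deleted L0 el a evs i k \<and>
             pos (list_before L0 evs i) (el k) \<le> l}. dly L0 el a D evs k t)"

text \<open>Element counter EC_e after the first i events, at time t: delay incurred
  by requests for e since the last element-counter event on e (or since start).\<close>
definition elem_counter :: "'e list \<Rightarrow> nat \<Rightarrow> (nat \<Rightarrow> 'e) \<Rightarrow> (nat \<Rightarrow> real) \<Rightarrow>
    (nat \<Rightarrow> real \<Rightarrow> real) \<Rightarrow> (real \<times> 'e lu_event) list \<Rightarrow> nat \<Rightarrow> real \<Rightarrow> 'e \<Rightarrow> real" where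
  "elem_counter L0 m el a D evs i t e =
     (\<Sum>k\<in>{k. k < m \<and> el k = e}.
        dly L0 el a D evs k t -
        (if \<exists>j<i. j < length evs \<and> snd (evs ! j) = ElemEv e
         then dly L0 el a D evs k
                (fst (evs ! (GREATEST j. j < i \<and> j < length evs \<and> snd (evs ! j) = ElemEv e)))
         else 0))"

definition enabled :: "'e list \<Rightarrow> nat \<Rightarrow> (nat \<Rightarrow> 'e) \<Rightarrow> (nat \<Rightarrow> real) \<Rightarrow>
    (nat \<Rightarrow> real \<Rightarrow> real) \<Rightarrow> (real \<times> 'e lu_event) list \<Rightarrow> nat \<Rightarrow> real \<Rightarrow> 'e lu_event \<Rightarrow> bool" where
  "enabled L0 m el a D evs i t ev =
     (case ev of
        PrefixEv l \<Rightarrow> 1 \<le> l \<and> l \<le> length L0 \<and> real l \<le> prefix_sum L0 m el a D evs i t l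
      | ElemEv e \<Rightarrow> e \<in> set L0 \<and>
          real (pos (list_before L0 evs i) e) \<le> elem_counter L0 m el a D evs i t e)"

definition alg_run :: "'e list \<Rightarrow> nat \<Rightarrow> (nat \<Rightarrow> 'e) \<Rightarrow> (nat \<Rightarrow> real) \<Rightarrow>
    (nat \<Rightarrow> real \<Rightarrow> real) \<Rightarrow> real \<Rightarrow> (real \<times> 'e lu_event) list \<Rightarrow> bool" where
  "alg_run L0 m el a D T evs \<longleftrightarrow>
     sorted (map fst evs) \<and> (\<forall>p\<in>set evs. fst p \<le> T) \<and>
     (\<forall>i<length evs. enabled L0 m el a D evs i (fst (evs ! i)) (snd (evs ! i))) \<and>
     (\<forall>i\<le>length evs. \<forall>t.
        (i = 0 \<or> fst (evs ! (i - 1)) \<le> t) \<and>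
        (if i < length evs then t < fst (evs ! i) else t \<le> T)
        \<longrightarrow> (\<forall>ev. \<not> enabled L0 m el a D evs i t ev))"

definition alg_cost :: "'e list \<Rightarrow> nat \<Rightarrow> (nat \<Rightarrow> 'e) \<Rightarrow> (nat \<Rightarrow> real) \<Rightarrow>
    (nat \<Rightarrow> real \<Rightarrow> real) \<Rightarrow> real \<Rightarrow> (real \<times> 'e lu_event) list \<Rightarrow> real" where
  "alg_cost L0 m el a D T evs =
     (\<Sum>i<length evs. real (acc_len (list_before L0 evs i) (snd (evs ! i)))
                     + real (swaps (list_before L0 evs i) (snd (evs ! i))))
     + (\<Sum>k<m. dly L0 el a D evs k T)"

end

theory Submission
  imports Defs
begin

lemma tele:
  fixes P :: "nat \<Rightarrow> bool" and h :: "nat \<Rightarrow> real"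
  shows "(\<Sum>i<n. if P i then h i - (if \<exists>j<i. P j then h (GREATEST j. j<i \<and> P j) else 0) else 0)
        = (if \<exists>j<n. P j then h (GREATEST j. j<n \<and> P j) else 0)"
proof (induction n)
  case 0 show ?case by simp
next
  case (Suc n)
  show ?case
  proof (cases "P n")
    case True
    have "(GREATEST j. j<Suc n \<and> P j) = n" by (rule Greatest_equality) (use True in auto)
    then show ?thesis using Suc True by auto
  next
    case False
    have "(\<lambda>j. j<Suc n \<and> P j) = (\<lambda>j. j<n \<and> P j)" using False less_Suc_eq by auto
    moreover have "(\<exists>j<Suc n. P j) = (\<exists>j<n. P j)" using False less_Suc_eq by auto
    ultimately show ?thesis using Suc False by auto
  qed
qed

theorem mainTheorem11:
  fixes L0 :: "'e list" and m :: nat and el :: "nat \<Rightarrow> 'e" and a :: "nat \<Rightarrow> real"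
    and D :: "nat \<Rightarrow> real \<Rightarrow> real" and T :: real and evs :: "(real \<times> 'e lu_event) list"
  assumes "distinct L0"
    and "\<forall>k<m. el k \<in> set L0"
    and nnD: "\<forall>k<m. \<forall>t. 0 \<le> D k t"
    and monoDk: "\<forall>k<m. mono (D k)"
    and zD: "\<forall>k<m. \<forall>t\<le>a k. D k t = 0"
    and run: "alg_run L0 m el a D T evs"
  shows "alg_cost L0 m el a D T evs \<le> 6 * (\<Sum>k<m. dly L0 el a D evs k T)"
proof -
  let ?N = "length evs"
  let ?dl = "dly L0 el a D evs"
  have mono_dl: "?dl k x \<le> ?dl k y" if "k<m" "x \<le> y" for k x y
  proof -
    have md: "mono (D k)" using monoDk that by auto
    show ?thesis unfolding dly_def
      by (cases "served_time L0 el a evs k") (auto intro!: md[THEN monoD] simp: that min.coboundedI1)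
  qed
  have nn_dl: "0 \<le> ?dl k x" if "k<m" for k x
    using nnD that unfolding dly_def by (cases "served_time L0 el a evs k") auto
  have z_dl: "?dl k x = 0" if "k<m" "x \<le> a k" for k x
    using zD that unfolding dly_def by (cases "served_time L0 el a evs k") auto
  have tT: "fst (evs!i) \<le> T" if "i < ?N" for i
    using run that unfolding alg_run_def by (meson nth_mem)
  have en: "enabled L0 m el a D evs i (fst (evs!i)) (snd (evs!i))" if "i < ?N" for i
    using run that unfolding alg_run_def by blast
  have delmono: "deleted L0 el a evs (Suc i) k" if "deleted L0 el a evs i k" for i k
    using that unfolding deleted_def using less_SucI by blast
  have del0: "\<not> deleted L0 el a evs 0 k" for k unfolding deleted_def by simp
  define dd where "dd i k = (if deleted L0 el a evs i k then 1 else 0::real)" for i k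
  have ddmono: "dd i k \<le> dd (Suc i) k" for i k using delmono[of i k] unfolding dd_def by auto
  define A where "A i = (\<Sum>k<m. (dd (Suc i) k - dd i k) * ?dl k T)" for i
  define P where "P k j = (j < ?N \<and> snd (evs!j) = ElemEv (el k))" for k j
  define f where "f k i = ?dl k (fst (evs!i)) - (if \<exists>j<i. P k j then ?dl k (fst (evs!(GREATEST j. j<i \<and> P k j))) else 0)" for k i
  define B where "B i = (\<Sum>k<m. if P k i then f k i else 0)" for i
  define cost where "cost i = real (acc_len (list_before L0 evs i) (snd (evs ! i)))
                     + real (swaps (list_before L0 evs i) (snd (evs ! i)))" for i
  let ?S = "\<Sum>k<m. ?dl k T"
  have A_nn: "0 \<le> A i" for i unfolding A_def
    by (rule sum_nonneg) (use ddmono nn_dl in auto)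
  have key: "cost i \<le> 2 * A i + 3 * B i" if iN: "i < ?N" for i
  proof (cases "snd (evs!i)")
    case (PrefixEv l)
    have B0: "B i = 0" unfolding B_def P_def using PrefixEv by simp
    have e1: "real l \<le> prefix_sum L0 m el a D evs i (fst (evs!i)) l"
      using en[OF iN] PrefixEv unfolding enabled_def by simp
    let ?Ss = "{k. k < m \<and> \<not> deleted L0 el a evs i k \<and> pos (list_before L0 evs i) (el k) \<le> l}"
    have "prefix_sum L0 m el a D evs i (fst (evs!i)) l = (\<Sum>k\<in>?Ss. ?dl k (fst (evs!i)))"
      unfolding prefix_sum_def by simp
    also have "\<dots> \<le> (\<Sum>k\<in>?Ss. (dd (Suc i) k - dd i k) * ?dl k T)"
    proof (rule sum_mono)
      fix k assume k: "k \<in> ?Ss"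
      show "?dl k (fst (evs!i)) \<le> (dd (Suc i) k - dd i k) * ?dl k T"
      proof (cases "a k \<le> fst (evs!i)")
        case True
        have "deleted L0 el a evs (Suc i) k" unfolding deleted_def
          using True k iN PrefixEv by (intro exI[of _ i]) auto
        then have "(dd (Suc i) k - dd i k) = 1" using k unfolding dd_def by auto
        then show ?thesis using mono_dl[of k "fst (evs!i)" T] tT[OF iN] k by simp
      next
        case False
        then have "?dl k (fst (evs!i)) = 0" using z_dl k by auto
        then show ?thesis using ddmono[of i k] nn_dl[of k T] k by simp
      qed
    qed
    also have "\<dots> \<le> A i" unfolding A_def
      by (rule sum_mono2) (use ddmono nn_dl in auto)
    finally have "real l \<le> A i" using e1 by linarith
    moreover have "cost i \<le> 2 * real l" unfolding cost_def using PrefixEv by simp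
    ultimately show ?thesis using B0 by simp
  next
    case (ElemEv e)
    let ?p = "pos (list_before L0 evs i) e"
    have e1: "real ?p \<le> elem_counter L0 m el a D evs i (fst (evs!i)) e"
      using en[OF iN] ElemEv unfolding enabled_def by simp
    have "elem_counter L0 m el a D evs i (fst (evs!i)) e
        = (\<Sum>k\<in>{k\<in>{..<m}. el k = e}. f k i)"
      unfolding elem_counter_def f_def P_def by (intro sum.cong) auto
    also have "\<dots> = B i" unfolding B_def P_def using iN ElemEv
      by (subst sum.inter_filter) (auto intro!: sum.cong)
    finally have "real ?p \<le> B i" using e1 by simp
    moreover have "cost i \<le> 3 * real ?p" unfolding cost_def using ElemEv by simp
    ultimately show ?thesis using A_nn[of i] by simp
  qed
  have sumA: "(\<Sum>i<?N. A i) \<le> ?S"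
  proof -
    have "(\<Sum>i<?N. A i) = (\<Sum>k<m. \<Sum>i<?N. (dd (Suc i) k - dd i k) * ?dl k T)"
      unfolding A_def by (rule sum.swap)
    also have "\<dots> = (\<Sum>k<m. (dd ?N k - dd 0 k) * ?dl k T)"
      proof (intro sum.cong refl)
      fix k
      have "(\<Sum>i<?N. dd (Suc i) k - dd i k) = dd ?N k - dd 0 k"
        by (rule sum_lessThan_telescope)
      then show "(\<Sum>i<?N. (dd (Suc i) k - dd i k) * ?dl k T) = (dd ?N k - dd 0 k) * ?dl k T"
        by (simp add: sum_distrib_right[symmetric])
    qed
    also have "\<dots> \<le> ?S"
      by (rule sum_mono) (use del0 nn_dl in \<open>auto simp: dd_def\<close>)
    finally show ?thesis .
  qed
  have sumB: "(\<Sum>i<?N. B i) \<le> ?S"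
  proof -
    have "(\<Sum>i<?N. B i) = (\<Sum>k<m. \<Sum>i<?N. if P k i then f k i else 0)"
      unfolding B_def by (rule sum.swap)
    also have "\<dots> = (\<Sum>k<m. if \<exists>j<?N. P k j then ?dl k (fst (evs!(GREATEST j. j<?N \<and> P k j))) else 0)"
      unfolding f_def by (subst tele) simp
    also have "\<dots> \<le> ?S"
    proof (rule sum_mono)
      fix k assume k: "k \<in> {..<m}"
      show "(if \<exists>j<?N. P k j then ?dl k (fst (evs!(GREATEST j. j<?N \<and> P k j))) else 0) \<le> ?dl k T"
      proof (cases "\<exists>j<?N. P k j")
        case True
        then obtain j where "j < ?N" "P k j" by blast
        then have "(GREATEST j. j<?N \<and> P k j) < ?N"
          by (metis (no_types, lifting) GreatestI_ex_nat less_imp_le)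
        then show ?thesis using True mono_dl[of k _ T] tT k by simp
      qed (use nn_dl k in auto)
    qed
    finally show ?thesis .
  qed
  have "(\<Sum>i<?N. cost i) \<le> (\<Sum>i<?N. 2 * A i + 3 * B i)"
    by (rule sum_mono) (use key in simp)
  also have "\<dots> = 2 * (\<Sum>i<?N. A i) + 3 * (\<Sum>i<?N. B i)"
    by (simp add: sum.distrib sum_distrib_left)
  finally have "(\<Sum>i<?N. cost i) \<le> 5 * ?S" using sumA sumB by linarith
  then show ?thesis unfolding alg_cost_def cost_def by simp
qed

end
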